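(* Let $\mathbb X,\mathbb Y_1,\mathbb Y_2,\mathbb X^\sharp$ be sets, $c:\mathbb X\times\mathbb X^\sharp\to\overline{\mathbb R}$ a coupling, $\phi:\mathbb Y_1\times\mathbb X\times\mathbb Y_2\to\overline{\mathbb R}$, and $g_1:\mathbb Y_1\to\overline{\mathbb R}$, $g_2:\mathbb Y_2\to\overline{\mathbb R}$. Suppose there exist $\Gamma_1:\mathbb X^\sharp\times\mathbb Y_1\to\overline{\mathbb R}$ and $\Gamma_2:\mathbb X^\sharp\times\mathbb Y_2\to\overline{\mathbb R}$ such that $$\sup_{x\in\mathbb X}\big(c(x,x^\sharp)\mathbin{\underset{\cdot}{+}}(-\phi(y_1,x,y_2))\big)=\Gamma_1(x^\sharp,y_1)\mathbin{\underset{\cdot}{+}}\Gamma_2(x^\sharp,y_2)\quad\text{for all }(x^\sharp,y_1,y_2)\in\mathbb X^\sharp\times\mathbb Y_1\times\mathbb Y_2.$$ Then for all $x^\sharp\in\mathbb X^\sharp$, $$(g_1\square^{\phi}g_2)^{c}(x^\sharp)=\sup_{y_1\in\mathbb Y_1}\big(\Gamma_1(x^\sharp,y_1)\mathbin{\underset{\cdot}{+}}(-g_1(y_1))\big)\mathbin{\underset{\cdot}{+}}\sup_{y_2\in\mathbb Y_2}\big(\Gamma_2(x^\sharp,y_2)\mathbin{\underset{\cdot}{+}}(-g_2(y_2))\big).$$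
   Context: $\overline{\mathbb R}=[-\infty,+\infty]$. The Moreau lower addition $\mathbin{\underset{\cdot}{+}}$ is usual addition extended by $(+\infty)\mathbin{\underset{\cdot}{+}}(-\infty)=(-\infty)\mathbin{\underset{\cdot}{+}}(+\infty)=-\infty$; the Moreau upper addition $\mathbin{\overset{\cdot}{+}}$ is usual addition extended by $(+\infty)\mathbin{\overset{\cdot}{+}}(-\infty)=(-\infty)\mathbin{\overset{\cdot}{+}}(+\infty)=+\infty$. The generalized inf-convolution is $(g_1\square^{\phi}g_2)(x)=\inf_{y_1,y_2}\big(g_1(y_1)\mathbin{\overset{\cdot}{+}}\phi(y_1,x,y_2)\mathbin{\overset{\cdot}{+}} g_2(y_2)\big)$, and for $h:\mathbb X\to\overline{\mathbb R}$, $h^{c}(x^\sharp)=\sup_{x}\big(c(x,x^\sharp)\mathbin{\underset{\cdot}{+}}(-h(x))\big)$. *)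

theory Defs
  imports "HOL-Library.Extended_Real"
begin

definition lower_add :: "ereal \<Rightarrow> ereal \<Rightarrow> ereal" (infixl "+\<^sub>l" 65) where
  "lower_add a b = (if (a = \<infinity> \<and> b = -\<infinity>) \<or> (a = -\<infinity> \<and> b = \<infinity>) then -\<infinity> else a + b)"

definition upper_add :: "ereal \<Rightarrow> ereal \<Rightarrow> ereal" (infixl "+\<^sub>u" 65) where
  "upper_add a b = (if (a = \<infinity> \<and> b = -\<infinity>) \<or> (a = -\<infinity> \<and> b = \<infinity>) then \<infinity> else a + b)"

definition gen_infconv ::
  "('y1 \<Rightarrow> ereal) \<Rightarrow> ('y1 \<Rightarrow> 'x \<Rightarrow> 'y2 \<Rightarrow> ereal) \<Rightarrow> ('y2 \<Rightarrow> ereal) \<Rightarrow> 'x \<Rightarrow> ereal" where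
  "gen_infconv g1 \<phi> g2 x = (INF p \<in> (UNIV :: ('y1 \<times> 'y2) set).
      g1 (fst p) +\<^sub>u \<phi> (fst p) x (snd p) +\<^sub>u g2 (snd p))"

definition c_conj :: "('x \<Rightarrow> 'xs \<Rightarrow> ereal) \<Rightarrow> ('x \<Rightarrow> ereal) \<Rightarrow> 'xs \<Rightarrow> ereal" where
  "c_conj c h xs = (SUP x \<in> (UNIV :: 'x set). c x xs +\<^sub>l (- h x))"

end

theory Submission
  imports Defs
begin

lemma la_comm: "a +\<^sub>l b = b +\<^sub>l a"
  unfolding lower_add_def by (auto simp: add.commute)

lemma la_assoc: "(a +\<^sub>l b) +\<^sub>l c = a +\<^sub>l (b +\<^sub>l c)"
  unfolding lower_add_def by (cases a; cases b; cases c) auto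

interpretation la: abel_semigroup lower_add
  by unfold_locales (rule la_assoc, rule la_comm)

lemma la_swap: "(a +\<^sub>l b) +\<^sub>l (c +\<^sub>l d) = (c +\<^sub>l a) +\<^sub>l (d +\<^sub>l b)"
proof -
  have "(a +\<^sub>l b) +\<^sub>l (c +\<^sub>l d) = a +\<^sub>l (b +\<^sub>l (c +\<^sub>l d))" by (rule la.assoc)
  also have "\<dots> = a +\<^sub>l (c +\<^sub>l (b +\<^sub>l d))" by (simp only: la.left_commute[of b c])
  also have "\<dots> = c +\<^sub>l (a +\<^sub>l (b +\<^sub>l d))" by (rule la.left_commute)
  also have "\<dots> = (c +\<^sub>l a) +\<^sub>l (b +\<^sub>l d)" by (rule la.assoc[symmetric])
  also have "\<dots> = (c +\<^sub>l a) +\<^sub>l (d +\<^sub>l b)" by (simp only: la.commute[of b d])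
  finally show ?thesis .
qed

lemma la_rot: "(a +\<^sub>l b) +\<^sub>l c = (a +\<^sub>l c) +\<^sub>l b"
  by (simp only: la.assoc la.commute[of b c])

lemma neg_ua: "- (a +\<^sub>u b) = (- a) +\<^sub>l (- b)"
  unfolding lower_add_def upper_add_def by (cases a; cases b) auto

lemma la_minf: "-\<infinity> +\<^sub>l b = -\<infinity>"
  by (cases b) (auto simp: lower_add_def)

lemma la_SUP: "a +\<^sub>l (SUP i\<in>I. f i) = (SUP i\<in>I. a +\<^sub>l f i)"
proof (cases "I = {}")
  case True then show ?thesis by (simp add: lower_add_def bot_ereal_def)
next
  case ne: False
  show ?thesis
  proof (cases a)
    case (real r)
    have "a +\<^sub>l (SUP i\<in>I. f i) = (SUP i\<in>I. f i) + a"
      using real by (auto simp: lower_add_def add.commute)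
    also have "\<dots> = (SUP i\<in>I. f i + a)"
      using SUP_ereal_add_left[OF ne, of a f] real by simp
    also have "\<dots> = (SUP i\<in>I. a +\<^sub>l f i)"
      using real by (auto simp: lower_add_def add.commute intro!: SUP_cong)
    finally show ?thesis .
  next
    case PInf
    show ?thesis
    proof (cases "(SUP i\<in>I. f i) = -\<infinity>")
      case True
      have "\<forall>i\<in>I. f i = -\<infinity>"
      proof
        fix i assume "i \<in> I"
        then have "f i \<le> (SUP i\<in>I. f i)" by (rule SUP_upper)
        with True show "f i = -\<infinity>" by simp
      qed
      then show ?thesis using True PInf ne by (simp add: lower_add_def)
    next
      case False
      then obtain i where i: "i \<in> I" "f i \<noteq> -\<infinity>"
      proof -
        have "\<not> (\<forall>i\<in>I. f i \<le> -\<infinity>)"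
        proof
          assume "\<forall>i\<in>I. f i \<le> -\<infinity>"
          then have "(SUP i\<in>I. f i) \<le> -\<infinity>" by (simp add: SUP_le_iff del: ereal_infty_less_eq)
          then show False using False by simp
        qed
        then show ?thesis using that by auto
      qed
      have "a +\<^sub>l f i = \<infinity>" using i PInf by (simp add: lower_add_def)
      then have "(SUP i\<in>I. a +\<^sub>l f i) = \<infinity>"
      proof -
        have "a +\<^sub>l f i \<le> (SUP i\<in>I. a +\<^sub>l f i)" by (rule SUP_upper[OF i(1)])
        with \<open>a +\<^sub>l f i = \<infinity>\<close> show ?thesis by simp
      qed
      then show ?thesis using False PInf by (simp add: lower_add_def)
    qed
  next
    case MInf
    then show ?thesis using ne by (simp add: la_minf)
  qed
qed

lemma la_SUP2: "(SUP i\<in>I. f i) +\<^sub>l a = (SUP i\<in>I. f i +\<^sub>l a)"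
  using la_SUP[of a f I] by (simp add: la_comm)

lemma SUP_pair: "(SUP p\<in>(UNIV::('a\<times>'b) set). f (fst p) (snd p) :: ereal)
   = (SUP a. SUP b. f a b)"
proof (rule antisym)
  show "(SUP p\<in>(UNIV::('a\<times>'b) set). f (fst p) (snd p)) \<le> (SUP a. SUP b. f a b)"
  proof (rule SUP_least)
    fix p :: "'a \<times> 'b"
    have "f (fst p) (snd p) \<le> (SUP b. f (fst p) b)" by (rule SUP_upper) simp
    also have "\<dots> \<le> (SUP a. SUP b. f a b)" by (rule SUP_upper) simp
    finally show "f (fst p) (snd p) \<le> (SUP a. SUP b. f a b)" .
  qed
  show "(SUP a. SUP b. f a b) \<le> (SUP p\<in>(UNIV::('a\<times>'b) set). f (fst p) (snd p))"
  proof (intro SUP_least)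
    fix a b
    show "f a b \<le> (SUP p\<in>(UNIV::('a\<times>'b) set). f (fst p) (snd p))"
      using SUP_upper[of "(a,b)" UNIV "\<lambda>p. f (fst p) (snd p)"] by simp
  qed
qed

theorem proposition3:
  fixes c :: "'x \<Rightarrow> 'xs \<Rightarrow> ereal"
    and \<phi> :: "'y1 \<Rightarrow> 'x \<Rightarrow> 'y2 \<Rightarrow> ereal"
    and g1 :: "'y1 \<Rightarrow> ereal" and g2 :: "'y2 \<Rightarrow> ereal"
    and \<Gamma>1 :: "'xs \<Rightarrow> 'y1 \<Rightarrow> ereal" and \<Gamma>2 :: "'xs \<Rightarrow> 'y2 \<Rightarrow> ereal"
  assumes "\<And>xs y1 y2. (SUP x \<in> (UNIV :: 'x set). c x xs +\<^sub>l (- \<phi> y1 x y2))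
              = \<Gamma>1 xs y1 +\<^sub>l \<Gamma>2 xs y2"
  shows "\<forall>xs. c_conj c (gen_infconv g1 \<phi> g2) xs
           = (SUP y1 \<in> (UNIV :: 'y1 set). \<Gamma>1 xs y1 +\<^sub>l (- g1 y1))
             +\<^sub>l (SUP y2 \<in> (UNIV :: 'y2 set). \<Gamma>2 xs y2 +\<^sub>l (- g2 y2))"
proof
  fix xs
  have neg: "- gen_infconv g1 \<phi> g2 x = (SUP y1. SUP y2. (- g1 y1 +\<^sub>l - g2 y2) +\<^sub>l - \<phi> y1 x y2)" for x
  proof -
    have "- gen_infconv g1 \<phi> g2 x = (SUP p\<in>(UNIV::('y1\<times>'y2) set).
        - (g1 (fst p) +\<^sub>u \<phi> (fst p) x (snd p) +\<^sub>u g2 (snd p)))"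
      unfolding gen_infconv_def by (rule ereal_SUP_uminus_eq[symmetric])
    also have "\<dots> = (SUP y1. SUP y2. (- g1 y1 +\<^sub>l - g2 y2) +\<^sub>l - \<phi> y1 x y2)"
      by (subst SUP_pair[where f="\<lambda>y1 y2. (- g1 y1 +\<^sub>l - g2 y2) +\<^sub>l - \<phi> y1 x y2", symmetric])
         (simp only: neg_ua la_rot)
    finally show ?thesis .
  qed
  have "c_conj c (gen_infconv g1 \<phi> g2) xs
      = (SUP x. SUP y1. SUP y2. (- g1 y1 +\<^sub>l - g2 y2) +\<^sub>l (c x xs +\<^sub>l - \<phi> y1 x y2))"
    unfolding c_conj_def neg la_SUP
    by (intro SUP_cong refl) (rule la.left_commute)
  also have "\<dots> = (SUP y1. SUP y2. SUP x. (- g1 y1 +\<^sub>l - g2 y2) +\<^sub>l (c x xs +\<^sub>l - \<phi> y1 x y2))"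
    by (subst SUP_commute) (subst SUP_commute, simp)
  also have "\<dots> = (SUP y1. SUP y2. (- g1 y1 +\<^sub>l - g2 y2) +\<^sub>l (\<Gamma>1 xs y1 +\<^sub>l \<Gamma>2 xs y2))"
  proof -
    have "(SUP x. A +\<^sub>l (c x xs +\<^sub>l - \<phi> y1 x y2)) = A +\<^sub>l (\<Gamma>1 xs y1 +\<^sub>l \<Gamma>2 xs y2)"
      for A y1 y2
      using la_SUP[of A "\<lambda>x. c x xs +\<^sub>l - \<phi> y1 x y2" UNIV] assms[of xs y1 y2] by simp
    then show ?thesis by simp
  qed
  also have "\<dots> = (SUP y1. SUP y2. (\<Gamma>1 xs y1 +\<^sub>l - g1 y1) +\<^sub>l (\<Gamma>2 xs y2 +\<^sub>l - g2 y2))"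
    by (intro SUP_cong refl) (rule la_swap)
  also have "\<dots> = (SUP y1 \<in> (UNIV :: 'y1 set). \<Gamma>1 xs y1 +\<^sub>l (- g1 y1))
             +\<^sub>l (SUP y2 \<in> (UNIV :: 'y2 set). \<Gamma>2 xs y2 +\<^sub>l (- g2 y2))"
    by (subst la_SUP2) (simp add: la_SUP)
  finally show "c_conj c (gen_infconv g1 \<phi> g2) xs = \<dots>" .
qed

end
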